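(* Let $a,n\in\mathbb{Z}^+$. Let $S=\mathbb{Z}[x]/(x^n-a)$ and for each $k\ge 0$ let $f_k(x)$ be the image of $(x+1)^k$ in $S$. Then $$\sqrt[n]{a} = \lim_{k\to\infty}\frac{f_{k+1}(1)}{f_k(1)} - 1 \quad\text{(in } \mathbb{R}).$$
   Context: The image of $(x+1)^k$ in $S$ is identified with its unique representative in $\mathbb{Z}[x]$ of degree less than $n$ (the remainder of $(x+1)^k$ upon division by $x^n-a$), and $f_k(1)$ denotes the evaluation of this representative at $x=1$; explicitly $f_k(1)=\sum_{j=0}^k\binom{k}{j}a^{\lfloor j/n\rfloor}$. $\sqrt[n]{a}$ denotes the positive real $n$-th root of $a$. *)

theory Defs
  imports "HOL-Analysis.Analysis" "HOL-Computational_Algebra.Polynomial"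
begin

definition modulus_poly :: "int \<Rightarrow> nat \<Rightarrow> real poly" where
  "modulus_poly a n = monom 1 n - [:of_int a:]"

text \<open>Representative of the image of (x+1)^k in Z[x]/(x^n - a): the remainder of
  (x+1)^k upon division by the monic polynomial x^n - a (computed over the reals;
  since x^n - a is monic this remainder has integer coefficients and is the unique
  representative of degree < n).\<close>
definition f_rep :: "int \<Rightarrow> nat \<Rightarrow> nat \<Rightarrow> real poly" where
  "f_rep a n k = ([:1, 1:] ^ k) mod modulus_poly a n"

end

theory Submission
  imports Defs
begin

lemma deg_modulus: "n > 0 \<Longrightarrow> degree (modulus_poly a n) = n"
proof -
  assume n: "n > 0"
  have "modulus_poly a n = monom 1 n + (- [:of_int a:])" unfolding modulus_poly_def by simp
  also have "degree \<dots> = degree (monom (1::real) n)"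
    by (rule degree_add_eq_left) (use n in \<open>simp add: degree_monom_eq\<close>)
  finally show ?thesis by (simp add: degree_monom_eq)
qed

lemma monom_dvd:
  fixes a :: int
  shows "modulus_poly a n dvd (monom 1 j - smult (of_int a ^ (j div n)) (monom 1 (j mod n)) :: real poly)"
proof -
  have "monom (1::real) j = monom 1 (j mod n) * (monom 1 n) ^ (j div n)"
    by (simp add: monom_power mult_monom mult.commute)
  moreover have "smult (of_int a ^ (j div n)) (monom (1::real) (j mod n)) = monom 1 (j mod n) * [:of_int a:] ^ (j div n)"
  proof -
    have "[:c:] ^ q = [:c ^ q:]" for c :: real and q by (induct q) auto
    then show ?thesis by (simp add: mult.commute smult_monom flip: smult_monom)
  qed
  ultimately have e: "monom 1 j - smult (of_int a ^ (j div n)) (monom (1::real) (j mod n)) = monom 1 (j mod n) * ((monom 1 n) ^ (j div n) - [:of_int a:] ^ (j div n))"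
    by (simp add: algebra_simps)
  have "modulus_poly a n dvd ((monom 1 n) ^ (j div n) - [:of_int a:] ^ (j div n))"
    unfolding modulus_poly_def power_diff_sumr2 by simp
  then show ?thesis unfolding e by (rule dvd_mult)
qed

lemma f_rep_eq:
  fixes a :: int
  assumes "n > 0"
  shows "f_rep a n k = (\<Sum>j\<le>k. smult (of_nat (k choose j) * of_int a ^ (j div n)) (monom 1 (j mod n)))"
proof -
  define R where "R = (\<Sum>j\<le>k. smult (of_nat (k choose j) * of_int a ^ (j div n)) (monom (1::real) (j mod n)))"
  have p: "[:1,1:] ^ k = (\<Sum>j\<le>k. smult (of_nat (k choose j)) (monom (1::real) j))"
  proof -
    have "[:1,1:] = (monom (1::real) 1 + 1)" by (simp add: monom_Suc monom_0 one_pCons)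
    then have "[:1,1:] ^ k = (\<Sum>j\<le>k. of_nat (k choose j) * monom (1::real) 1 ^ j * 1 ^ (k - j))"
      by (simp add: binomial_ring)
    also have "\<dots> = (\<Sum>j\<le>k. smult (of_nat (k choose j)) (monom (1::real) j))"
      by (intro sum.cong refl) (simp add: monom_power of_nat_poly smult_monom mult_monom)
    finally show ?thesis .
  qed
  have "[:1,1:] ^ k - R = (\<Sum>j\<le>k. smult (of_nat (k choose j)) (monom 1 j - smult (of_int a ^ (j div n)) (monom 1 (j mod n))))"
    unfolding p R_def by (simp add: sum_subtractf smult_diff_right)
  moreover have "modulus_poly a n dvd \<dots>"
    by (intro dvd_sum dvd_smult monom_dvd)
  ultimately have d: "modulus_poly a n dvd [:1,1:] ^ k - R" by simp
  have "degree R \<le> n - 1" unfolding R_def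
  proof (intro degree_sum_le)
    fix j assume "j \<in> {..k}"
    have "j mod n < n" using assms by simp
    then show "degree (smult (of_nat (k choose j) * of_int a ^ (j div n)) (monom (1::real) (j mod n))) \<le> n - 1"
      using order.trans[OF degree_smult_le degree_monom_le, of "of_nat (k choose j) * of_int a ^ (j div n)" "1::real" "j mod n"]
      by linarith
  qed simp
  then have "degree R < degree (modulus_poly a n)" using assms deg_modulus by simp
  then have "R mod modulus_poly a n = R" by (rule mod_poly_less)
  moreover have "([:1,1:] ^ k - R) mod modulus_poly a n = 0" using d by simp
  ultimately show ?thesis unfolding f_rep_def R_def[symmetric] by (simp add: poly_mod_diff_left)
qed

lemma f_rep_1:
  fixes a :: int
  assumes "n > 0"
  shows "poly (f_rep a n k) 1 = (\<Sum>j\<le>k. of_nat (k choose j) * of_int a ^ (j div n))"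
  unfolding f_rep_eq[OF assms] by (simp add: poly_sum poly_monom)

definition zeta :: "nat \<Rightarrow> complex" where
  "zeta n = exp (2 * of_real pi * \<i> / of_nat n)"

lemma zeta_pow: "zeta n ^ m = exp (2 * of_real pi * \<i> * of_nat m / of_nat n)"
  unfolding zeta_def by (simp flip: exp_of_nat_mult) (simp add: field_simps)

lemma zeta_pow_1: "n > 0 \<Longrightarrow> zeta n ^ m = 1 \<longleftrightarrow> n dvd m"
  unfolding zeta_pow by (rule complex_root_unity_eq_1) simp

lemma norm_zeta_pow: "norm (zeta n ^ m) = 1"
  unfolding zeta_pow by (simp add: norm_exp_eq_Re)

lemma zeta_sum:
  assumes "n > 0"
  shows "(\<Sum>t<n. zeta n ^ (t * m)) = (if n dvd m then of_nat n else 0)"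
proof (cases "n dvd m")
  case True
  then have "zeta n ^ m = 1" using zeta_pow_1 assms by simp
  then show ?thesis using True by (simp add: power_mult mult.commute[of _ m])
next
  case False
  then have ne: "zeta n ^ m \<noteq> 1" using zeta_pow_1 assms by simp
  have "(\<Sum>t<n. zeta n ^ (t * m)) = (\<Sum>t<n. (zeta n ^ m) ^ t)"
    by (simp add: power_mult mult.commute[of _ m])
  also have "\<dots> = ((zeta n ^ m) ^ n - 1) / (zeta n ^ m - 1)"
    using ne by (rule geometric_sum)
  also have "(zeta n ^ m) ^ n = (zeta n ^ n) ^ m" by (simp flip: power_mult add: mult.commute)
  also have "zeta n ^ n = 1" using zeta_pow_1 assms by simp
  finally show ?thesis using False by simp
qed

lemma mod_dvd_iff_aux:
  fixes n i j :: nat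
  assumes "i < n"
  shows "n dvd (j + (n - i)) \<longleftrightarrow> i = j mod n"
proof -
  have "n dvd (j + (n - i)) \<longleftrightarrow> n dvd (j mod n + (n - i))"
    by (simp add: dvd_add_left_iff[symmetric] mod_add_left_eq dvd_eq_mod_eq_0)
  also have "\<dots> \<longleftrightarrow> j mod n + (n - i) = n"
  proof
    assume d: "n dvd (j mod n + (n - i))"
    have "j mod n < n" using assms by simp
    then have h: "0 < j mod n + (n - i)" "j mod n + (n - i) < 2 * n" using assms by arith+
    from d obtain q where q: "j mod n + (n - i) = n * q" by (auto elim: dvdE)
    with h have "0 < q" "q < 2" by (auto simp: mult.commute)
    then have "q = 1" by simp
    with q show "j mod n + (n - i) = n" by simp
  qed simp
  also have "\<dots> \<longleftrightarrow> i = j mod n" using assms by auto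
  finally show ?thesis .
qed

lemma sum_swap3: "(\<Sum>j\<in>A. \<Sum>i\<in>B. \<Sum>t\<in>C. F j i t) = (\<Sum>t\<in>C. \<Sum>i\<in>B. \<Sum>j\<in>A. F j i t)"
proof -
  have "(\<Sum>j\<in>A. \<Sum>i\<in>B. \<Sum>t\<in>C. F j i t) = (\<Sum>j\<in>A. \<Sum>t\<in>C. \<Sum>i\<in>B. F j i t)"
    by (rule sum.cong[OF refl], rule sum.swap)
  also have "\<dots> = (\<Sum>t\<in>C. \<Sum>j\<in>A. \<Sum>i\<in>B. F j i t)" by (rule sum.swap)
  also have "\<dots> = (\<Sum>t\<in>C. \<Sum>i\<in>B. \<Sum>j\<in>A. F j i t)" by (rule sum.cong[OF refl], rule sum.swap)
  finally show ?thesis .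
qed

lemma expansion:
  fixes c :: "nat \<Rightarrow> complex" and r :: complex
  assumes n: "n > 0"
  shows "(\<Sum>j\<le>k. of_nat (k choose j) * r ^ j * c (j mod n)) =
         (\<Sum>t<n. (\<Sum>i<n. c i * zeta n ^ (t * (n - i))) / of_nat n * (r * zeta n ^ t + 1) ^ k)"
proof -
  have inner: "c (j mod n) = (\<Sum>i<n. c i * (\<Sum>t<n. zeta n ^ (t * (j + (n - i)))) / of_nat n)" for j
  proof -
    have "(\<Sum>i<n. c i * (\<Sum>t<n. zeta n ^ (t * (j + (n - i)))) / of_nat n)
        = (\<Sum>i<n. if i = j mod n then c i else 0)"
    proof (intro sum.cong refl)
      fix i assume "i \<in> {..<n}"
      then have "n dvd (j + (n - i)) \<longleftrightarrow> i = j mod n" by (intro mod_dvd_iff_aux) simp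
      then show "c i * (\<Sum>t<n. zeta n ^ (t * (j + (n - i)))) / of_nat n = (if i = j mod n then c i else 0)"
        using n by (simp only: zeta_sum[OF n]) simp
    qed
    also have "\<dots> = c (j mod n)" using n by (simp add: sum.delta')
    finally show ?thesis by simp
  qed
  have "(\<Sum>j\<le>k. of_nat (k choose j) * r ^ j * c (j mod n)) =
        (\<Sum>j\<le>k. \<Sum>i<n. \<Sum>t<n. of_nat (k choose j) * r ^ j * c i * zeta n ^ (t * (j + (n - i))) / of_nat n)"
  proof (intro sum.cong refl)
    fix j
    have "of_nat (k choose j) * r ^ j * c (j mod n) = of_nat (k choose j) * r ^ j * (\<Sum>i<n. c i * (\<Sum>t<n. zeta n ^ (t * (j + (n - i)))) / of_nat n)"
      by (subst inner) (rule refl)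
    also have "\<dots> = (\<Sum>i<n. \<Sum>t<n. of_nat (k choose j) * r ^ j * c i * zeta n ^ (t * (j + (n - i))) / of_nat n)"
      unfolding sum_distrib_left sum_divide_distrib times_divide_eq_right mult.assoc by (rule refl)
    finally show "of_nat (k choose j) * r ^ j * c (j mod n) = (\<Sum>i<n. \<Sum>t<n. of_nat (k choose j) * r ^ j * c i * zeta n ^ (t * (j + (n - i))) / of_nat n)" .
  qed
  also have "\<dots> = (\<Sum>t<n. \<Sum>i<n. \<Sum>j\<le>k. of_nat (k choose j) * r ^ j * c i * zeta n ^ (t * (j + (n - i))) / of_nat n)"
    by (rule sum_swap3)
  also have "\<dots> = (\<Sum>t<n. (\<Sum>i<n. c i * zeta n ^ (t * (n - i))) / of_nat n * (r * zeta n ^ t + 1) ^ k)"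
  proof (intro sum.cong refl)
    fix t
    have "(r * zeta n ^ t + 1) ^ k = (\<Sum>j\<le>k. of_nat (k choose j) * r ^ j * zeta n ^ (t * j))"
      by (simp add: binomial_ring power_mult_distrib power_mult mult.assoc)
    then have "(\<Sum>i<n. c i * zeta n ^ (t * (n - i))) / of_nat n * (r * zeta n ^ t + 1) ^ k
       = (\<Sum>i<n. \<Sum>j\<le>k. (c i * zeta n ^ (t * (n - i)) / of_nat n) * (of_nat (k choose j) * r ^ j * zeta n ^ (t * j)))"
      by (simp only: sum_product sum_divide_distrib)
    also have "\<dots> = (\<Sum>i<n. \<Sum>j\<le>k. of_nat (k choose j) * r ^ j * c i * zeta n ^ (t * (j + (n - i))) / of_nat n)"
      by (intro sum.cong refl) (simp only: distrib_left power_add, simp add: mult_ac)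
    finally show "(\<Sum>i<n. \<Sum>j\<le>k. of_nat (k choose j) * r ^ j * c i * zeta n ^ (t * (j + (n - i))) / of_nat n) =
        (\<Sum>i<n. c i * zeta n ^ (t * (n - i))) / of_nat n * (r * zeta n ^ t + 1) ^ k" by simp
  qed
  finally show ?thesis .
qed

lemma norm_lt:
  fixes w :: complex and r :: real
  assumes "norm w = 1" "w \<noteq> 1" "r > 0"
  shows "norm (of_real r * w + 1) < 1 + r"
proof -
  have s: "Re w ^ 2 + Im w ^ 2 = 1" using assms(1) by (simp add: cmod_def)
  have "Re w \<noteq> 1"
  proof
    assume "Re w = 1"
    then have "Im w = 0" using s by simp
    then show False using \<open>Re w = 1\<close> assms(2) by (simp add: complex_eq_iff)
  qed
  moreover have "Re w \<le> 1" using complex_Re_le_cmod[of w] assms(1) by simp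
  ultimately have lt: "Re w < 1" by simp
  have "norm (of_real r * w + 1) ^ 2 = (r * Re w + 1) ^ 2 + (r * Im w) ^ 2"
    by (simp add: cmod_def)
  also have "\<dots> = r ^ 2 * (Re w ^ 2 + Im w ^ 2) + 2 * r * Re w + 1" by (simp add: power2_eq_square algebra_simps)
  also have "\<dots> = r ^ 2 + 2 * r * Re w + 1" using s by simp
  also have "\<dots> < (1 + r) ^ 2" using lt assms(3) by (simp add: power2_eq_square algebra_simps)
  finally show ?thesis using assms(3) by (smt (verit) power_mono norm_ge_zero)
qed

lemma limB:
  fixes c :: "nat \<Rightarrow> real" and r :: real
  assumes n: "n > 0" and r: "r > 0"
  shows "(\<lambda>k. (\<Sum>j\<le>k. of_nat (k choose j) * r ^ j * c (j mod n)) / (1 + r) ^ k) \<longlonglongrightarrow> (\<Sum>i<n. c i) / of_nat n"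
proof -
  define b where "b t = (\<Sum>i<n. complex_of_real (c i) * zeta n ^ (t * (n - i)))" for t
  define q where "q t = (of_real r * zeta n ^ t + 1) / complex_of_real (1 + r)" for t
  have eq: "complex_of_real ((\<Sum>j\<le>k. of_nat (k choose j) * r ^ j * c (j mod n)) / (1 + r) ^ k)
      = (\<Sum>t<n. b t / of_nat n * q t ^ k)" for k
  proof -
    have "complex_of_real (\<Sum>j\<le>k. of_nat (k choose j) * r ^ j * c (j mod n))
        = (\<Sum>j\<le>k. of_nat (k choose j) * complex_of_real r ^ j * complex_of_real (c (j mod n)))"
      by simp
    also have "\<dots> = (\<Sum>t<n. b t / of_nat n * (of_real r * zeta n ^ t + 1) ^ k)"
      unfolding b_def by (rule expansion[OF n])
    finally have A: "complex_of_real (\<Sum>j\<le>k. of_nat (k choose j) * r ^ j * c (j mod n)) = (\<Sum>t<n. b t / of_nat n * (of_real r * zeta n ^ t + 1) ^ k)" .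
    have "complex_of_real ((\<Sum>j\<le>k. of_nat (k choose j) * r ^ j * c (j mod n)) / (1 + r) ^ k)
       = complex_of_real (\<Sum>j\<le>k. of_nat (k choose j) * r ^ j * c (j mod n)) / complex_of_real (1 + r) ^ k"
      by (simp only: of_real_divide of_real_power)
    also have "\<dots> = (\<Sum>t<n. b t / of_nat n * (of_real r * zeta n ^ t + 1) ^ k / complex_of_real (1 + r) ^ k)"
      unfolding A sum_divide_distrib ..
    also have "\<dots> = (\<Sum>t<n. b t / of_nat n * q t ^ k)"
      unfolding q_def power_divide by (simp only: times_divide_eq_right)
    finally show ?thesis .
  qed
  have lim: "(\<lambda>k. b t / of_nat n * q t ^ k) \<longlonglongrightarrow> (if t = 0 then b 0 / of_nat n else 0)" if "t \<in> {..<n}" for t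
  proof (cases "t = 0")
    case True
    have "1 + complex_of_real r \<noteq> 0" using r by (auto simp: complex_eq_iff)
    then have "q 0 = 1" unfolding q_def by (simp add: field_simps)
    then show ?thesis using True by simp
  next
    case False
    have "zeta n ^ t \<noteq> 1" using zeta_pow_1[OF n, of t] False that by auto
    then have "norm (of_real r * zeta n ^ t + 1) < 1 + r" using norm_lt norm_zeta_pow r by blast
    then have "norm (q t) < 1" using r unfolding q_def norm_divide norm_of_real by simp
    then have "(\<lambda>k. b t / of_nat n * q t ^ k) \<longlonglongrightarrow> b t / of_nat n * 0"
      by (intro tendsto_mult tendsto_const LIMSEQ_power_zero)
    then show ?thesis using False by simp
  qed
  have "(\<lambda>k. \<Sum>t<n. b t / of_nat n * q t ^ k) \<longlonglongrightarrow> (\<Sum>t<n. if t = 0 then b 0 / of_nat n else 0)"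
    by (rule tendsto_sum) (rule lim)
  also have "(\<Sum>t<n. if t = 0 then b 0 / of_nat n else 0) = b 0 / of_nat n" using n by simp
  also have "b 0 / of_nat n = complex_of_real ((\<Sum>i<n. c i) / of_nat n)" by (simp add: b_def)
  finally have "(\<lambda>k. complex_of_real ((\<Sum>j\<le>k. of_nat (k choose j) * r ^ j * c (j mod n)) / (1 + r) ^ k))
     \<longlonglongrightarrow> complex_of_real ((\<Sum>i<n. c i) / of_nat n)" unfolding eq .
  then show ?thesis by (rule tendsto_of_real_iff[THEN iffD1])
qed


theorem lemma6p1:
  fixes a :: int and n :: nat
  assumes "a > 0" and "n > 0"
  shows "(\<lambda>k. poly (f_rep a n (k + 1)) 1 / poly (f_rep a n k) 1 - 1)
           \<longlonglongrightarrow> root n (of_int a)"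
proof -
  define r where "r = root n (of_int a)"
  have r: "r > 0" using assms unfolding r_def by simp
  have rn: "r ^ n = of_int a" using assms unfolding r_def by simp
  define c where "c i = 1 / r ^ i" for i :: nat
  define g where "g k = poly (f_rep a n k) 1" for k
  have ai: "(of_int a :: real) ^ (j div n) = r ^ j * c (j mod n)" for j
  proof -
    have "r ^ j = r ^ (n * (j div n) + j mod n)" by simp
    also have "\<dots> = (of_int a) ^ (j div n) * r ^ (j mod n)" by (simp only: power_add power_mult rn)
    finally show ?thesis using r unfolding c_def by simp
  qed
  have g: "g k = (\<Sum>j\<le>k. of_nat (k choose j) * r ^ j * c (j mod n))" for k
    unfolding g_def f_rep_1[OF assms(2)] ai by (simp add: mult.assoc)
  have gpos: "g k > 0" for k
  proof -
    have "g k = (\<Sum>j\<in>insert 0 {1..k}. of_nat (k choose j) * r ^ j * c (j mod n))"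
      unfolding g by (intro sum.cong) auto
    also have "\<dots> = 1 + (\<Sum>j\<in>{1..k}. of_nat (k choose j) * r ^ j * c (j mod n))"
      by (subst sum.insert) (auto simp: c_def)
    also have "\<dots> > 0" using r
      by (intro add_pos_nonneg sum_nonneg) (auto simp: c_def)
    finally show ?thesis .
  qed
  define L where "L = (\<Sum>i<n. c i) / of_nat n"
  have Lpos: "L > 0"
  proof -
    have "(\<Sum>i<n. c i) > 0" using assms(2) r
      by (intro sum_pos) (auto simp: c_def)
    then show ?thesis unfolding L_def using assms(2) by simp
  qed
  have G: "(\<lambda>k. g k / (1 + r) ^ k) \<longlonglongrightarrow> L"
    unfolding g L_def by (rule limB[OF assms(2) r])
  have G1: "(\<lambda>k. g (Suc k) / (1 + r) ^ (Suc k)) \<longlonglongrightarrow> L"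
    using LIMSEQ_Suc[OF G] .
  have T: "(\<lambda>k. (1 + r) * (g (Suc k) / (1 + r) ^ (Suc k)) / (g k / (1 + r) ^ k) - 1) \<longlonglongrightarrow> (1 + r) * L / L - 1"
    using Lpos by (intro tendsto_intros G G1) simp
  have E: "(1 + r) * (g (Suc k) / (1 + r) ^ (Suc k)) / (g k / (1 + r) ^ k) = g (k + 1) / g k" for k
  proof -
    have p: "(1 + r) ^ k > 0" using r by simp
    have "(1 + r) * (g (Suc k) / (1 + r) ^ (Suc k)) = g (Suc k) / (1 + r) ^ k"
      using r by (simp add: power_Suc)
    then show ?thesis using p r by simp
  qed
  have Lr: "(1 + r) * L / L - 1 = r" using Lpos by simp
  from T have "(\<lambda>k. g (k + 1) / g k - 1) \<longlonglongrightarrow> r" unfolding E Lr .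
  then show ?thesis unfolding g_def r_def .
qed

end
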